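(* Let arm $i$ be a Markov decision process with finite state space $\mathcal{S}_i$, reward function $R_i:\mathcal{S}_i\to\mathbb{R}$, passive-action transition probabilities $P^{i0}_{ss'}$, and for each worker $j$ an intervention cost $c_{ij}>0$ and active-action transition probabilities $P^{ij}_{ss'}$. Let $j$ and $j'$ be two workers such that $c_{ij}\neq c_{ij'}$ and $P^{ij}_{ss'}=P^{ij'}_{ss'}$ for every $s,s'\in\mathcal{S}_i$. Then their Whittle indices are inversely proportional to their costs: for each state $s\in\mathcal{S}_i$, \[\frac{\lambda^\star_{ij}(s)}{\lambda^\star_{ij'}(s)}=\frac{c_{ij'}}{c_{ij}}.\]
   Context: For an arm $i$ and worker $j$, consider the two-action MDP with action set $\{0,j\}$ (0 = no intervention, $j$ = intervention by worker $j$). For a charge $\lambda\ge 0$, the augmented reward is $R_i(s)-\lambda c_{ij}$ if action $j$ is taken in state $s$ and $R_i(s)$ if action $0$ is taken; transitions are $P^{ij}_{ss'}$ under action $j$ and $P^{i0}_{ss'}$ under action $0$. Let $V_{i,j}(s,\lambda,a)$ denote the value of taking action $a\in\{0,j\}$ in state $s$ and acting optimally thereafter in this MDP, i.e. $V_{i,j}(s,\lambda,j)=R_i(s)-\lambda c_{ij}+\sum_{s'}P^{ij}_{ss'}V_{i,j}(s',\lambda)$ and $V_{i,j}(s,\lambda,0)=R_i(s)+\sum_{s'}P^{i0}_{ss'}V_{i,j}(s',\lambda)$, with $V_{i,j}(s',\lambda)=\max_{a\in\{0,j\}}V_{i,j}(s',\lambda,a)$. The (decoupled) Whittle index of worker $j$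 on arm $i$ at state $s$ is $\lambda^\star_{ij}(s)=\min\{\lambda : V_{i,j}(s,\lambda,j)=V_{i,j}(s,\lambda,0)\}$. *)

theory Defs
  imports Main "HOL-Analysis.Analysis"
begin

text \<open>Two-action MDP of arm i with worker j: passive transitions P0, active transitions Pj,
  intervention cost c, discount factor beta. Value functions are indexed by the charge lambda:
  V lambda s.\<close>

definition stochastic :: "('s::finite \<Rightarrow> 's \<Rightarrow> real) \<Rightarrow> bool" where
  "stochastic P \<longleftrightarrow> (\<forall>s s'. 0 \<le> P s s') \<and> (\<forall>s. (\<Sum>s'\<in>UNIV. P s s') = 1)"

definition Q_act :: "('s::finite \<Rightarrow> real) \<Rightarrow> ('s \<Rightarrow> 's \<Rightarrow> real) \<Rightarrow> real \<Rightarrow> real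
    \<Rightarrow> (real \<Rightarrow> 's \<Rightarrow> real) \<Rightarrow> 's \<Rightarrow> real \<Rightarrow> real" where
  "Q_act R Pj c beta V s lam = R s - lam * c + beta * (\<Sum>s'\<in>UNIV. Pj s s' * V lam s')"

definition Q_pass :: "('s::finite \<Rightarrow> real) \<Rightarrow> ('s \<Rightarrow> 's \<Rightarrow> real) \<Rightarrow> real
    \<Rightarrow> (real \<Rightarrow> 's \<Rightarrow> real) \<Rightarrow> 's \<Rightarrow> real \<Rightarrow> real" where
  "Q_pass R P0 beta V s lam = R s + beta * (\<Sum>s'\<in>UNIV. P0 s s' * V lam s')"

definition is_value_fn :: "('s::finite \<Rightarrow> real) \<Rightarrow> ('s \<Rightarrow> 's \<Rightarrow> real) \<Rightarrow> ('s \<Rightarrow> 's \<Rightarrow> real)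
    \<Rightarrow> real \<Rightarrow> real \<Rightarrow> (real \<Rightarrow> 's \<Rightarrow> real) \<Rightarrow> bool" where
  "is_value_fn R P0 Pj c beta V \<longleftrightarrow>
     (\<forall>lam \<ge> 0. \<forall>s. V lam s = max (Q_act R Pj c beta V s lam) (Q_pass R P0 beta V s lam))"

definition is_whittle_index :: "('s::finite \<Rightarrow> real) \<Rightarrow> ('s \<Rightarrow> 's \<Rightarrow> real) \<Rightarrow> ('s \<Rightarrow> 's \<Rightarrow> real)
    \<Rightarrow> real \<Rightarrow> real \<Rightarrow> (real \<Rightarrow> 's \<Rightarrow> real) \<Rightarrow> 's \<Rightarrow> real \<Rightarrow> bool" where
  "is_whittle_index R P0 Pj c beta V s lam \<longleftrightarrow>
     0 \<le> lam \<and> Q_act R Pj c beta V s lam = Q_pass R P0 beta V s lam \<and>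
     (\<forall>mu \<ge> 0. Q_act R Pj c beta V s mu = Q_pass R P0 beta V s mu \<longrightarrow> lam \<le> mu)"

end

theory Submission
  imports Defs
begin

lemma stoch_diff:
  fixes f g :: "'s::finite \<Rightarrow> real"
  assumes "stochastic P" and "\<forall>s'. \<bar>f s' - g s'\<bar> \<le> M"
  shows "\<bar>(\<Sum>s'\<in>UNIV. P s s' * f s') - (\<Sum>s'\<in>UNIV. P s s' * g s')\<bar> \<le> M"
proof -
  have p: "\<forall>s'. 0 \<le> P s s'" and one: "(\<Sum>s'\<in>UNIV. P s s') = 1"
    using assms(1) unfolding stochastic_def by auto
  have "\<bar>(\<Sum>s'\<in>UNIV. P s s' * f s') - (\<Sum>s'\<in>UNIV. P s s' * g s')\<bar>
      = \<bar>\<Sum>s'\<in>UNIV. P s s' * (f s' - g s')\<bar>"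
    by (simp add: sum_subtractf right_diff_distrib)
  also have "\<dots> \<le> (\<Sum>s'\<in>UNIV. \<bar>P s s' * (f s' - g s')\<bar>)" by (rule sum_abs)
  also have "\<dots> \<le> (\<Sum>s'\<in>UNIV. P s s' * M)"
  proof (rule sum_mono)
    fix x
    show "\<bar>P s x * (f x - g x)\<bar> \<le> P s x * M"
      using p assms(2) by (simp add: abs_mult mult_left_mono)
  qed
  also have "\<dots> = M" using one by (simp add: sum_distrib_right[symmetric])
  finally show ?thesis .
qed

lemma max_diff: "\<bar>max (a::real) b - max c d\<bar> \<le> max \<bar>a - c\<bar> \<bar>b - d\<bar>"
  by (cases "a \<le> b"; cases "c \<le> d") (auto simp: max_def)

lemma bellman_unique:
  fixes f g :: "'s::finite \<Rightarrow> real"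
  assumes s0: "stochastic P0" and s1: "stochastic P1" and b0: "0 \<le> beta" and b1: "beta < 1"
    and hf: "\<forall>s. f s = max (A s + beta*(\<Sum>s'\<in>UNIV. P1 s s' * f s')) (B s + beta*(\<Sum>s'\<in>UNIV. P0 s s' * f s'))"
    and hg: "\<forall>s. g s = max (A s + beta*(\<Sum>s'\<in>UNIV. P1 s s' * g s')) (B s + beta*(\<Sum>s'\<in>UNIV. P0 s s' * g s'))"
  shows "f = g"
proof -
  define M where "M = Max (range (\<lambda>s. \<bar>f s - g s\<bar>))"
  have bd: "\<forall>s. \<bar>f s - g s\<bar> \<le> M" unfolding M_def by (auto intro: Max_ge)
  have key: "\<bar>f s - g s\<bar> \<le> beta * M" for s
  proof -
    have d1: "\<bar>(A s + beta*(\<Sum>s'\<in>UNIV. P1 s s' * f s')) - (A s + beta*(\<Sum>s'\<in>UNIV. P1 s s' * g s'))\<bar> \<le> beta * M"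
    proof -
      have "\<bar>(A s + beta*(\<Sum>s'\<in>UNIV. P1 s s' * f s')) - (A s + beta*(\<Sum>s'\<in>UNIV. P1 s s' * g s'))\<bar>
        = beta * \<bar>(\<Sum>s'\<in>UNIV. P1 s s' * f s') - (\<Sum>s'\<in>UNIV. P1 s s' * g s')\<bar>"
        using b0 by (simp add: right_diff_distrib[symmetric] abs_mult)
      also have "\<dots> \<le> beta * M" using stoch_diff[OF s1 bd] b0 by (simp add: mult_left_mono)
      finally show ?thesis .
    qed
    have d2: "\<bar>(B s + beta*(\<Sum>s'\<in>UNIV. P0 s s' * f s')) - (B s + beta*(\<Sum>s'\<in>UNIV. P0 s s' * g s'))\<bar> \<le> beta * M"
    proof -
      have "\<bar>(B s + beta*(\<Sum>s'\<in>UNIV. P0 s s' * f s')) - (B s + beta*(\<Sum>s'\<in>UNIV. P0 s s' * g s'))\<bar>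
        = beta * \<bar>(\<Sum>s'\<in>UNIV. P0 s s' * f s') - (\<Sum>s'\<in>UNIV. P0 s s' * g s')\<bar>"
        using b0 by (simp add: right_diff_distrib[symmetric] abs_mult)
      also have "\<dots> \<le> beta * M" using stoch_diff[OF s0 bd] b0 by (simp add: mult_left_mono)
      finally show ?thesis .
    qed
    have "\<bar>f s - g s\<bar> \<le> max \<bar>(A s + beta*(\<Sum>s'\<in>UNIV. P1 s s' * f s')) - (A s + beta*(\<Sum>s'\<in>UNIV. P1 s s' * g s'))\<bar>
       \<bar>(B s + beta*(\<Sum>s'\<in>UNIV. P0 s s' * f s')) - (B s + beta*(\<Sum>s'\<in>UNIV. P0 s s' * g s'))\<bar>"
      by (subst hf, subst hg, rule max_diff)
    with d1 d2 show ?thesis by linarith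
  qed
  have "M \<in> range (\<lambda>s. \<bar>f s - g s\<bar>)" unfolding M_def by (rule Max_in) auto
  then obtain s0 where "M = \<bar>f s0 - g s0\<bar>" by auto
  hence "M \<le> beta * M" "0 \<le> M" using key[of s0] by auto
  hence "M = 0" using b1 by (smt (verit) mult_right_less_imp_less mult_cancel_right1)
  hence "\<forall>s. f s = g s" using bd by force
  thus ?thesis by auto
qed

theorem theorem1:
  fixes R :: "'s::finite \<Rightarrow> real"
    and P0 :: "'s \<Rightarrow> 's \<Rightarrow> real"
    and P :: "'w \<Rightarrow> 's \<Rightarrow> 's \<Rightarrow> real"
    and c :: "'w \<Rightarrow> real"
    and beta :: real
    and V :: "'w \<Rightarrow> real \<Rightarrow> 's \<Rightarrow> real"
    and j j' :: 'w
    and s :: 's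
    and lam1 lam2 :: real
  assumes "stochastic P0"
    and "\<forall>w. stochastic (P w)"
    and "\<forall>w. c w > 0"
    and "0 \<le> beta" and "beta < 1"
    and "\<forall>w. is_value_fn R P0 (P w) (c w) beta (V w)"
    and "c j \<noteq> c j'"
    and "\<forall>s s'. P j s s' = P j' s s'"
    and "is_whittle_index R P0 (P j) (c j) beta (V j) s lam1"
    and "is_whittle_index R P0 (P j') (c j') beta (V j') s lam2"
  shows "c j * lam1 = c j' * lam2 \<and> (lam2 \<noteq> 0 \<longrightarrow> lam1 / lam2 = c j' / c j)"
proof -
  define k where "k = c j / c j'"
  have cj: "c j > 0" and cj': "c j' > 0" using assms(3) by auto
  have k0: "k > 0" unfolding k_def using cj cj' by simp
  have kc: "k * lam * c j' = lam * c j" for lam unfolding k_def using cj' by simp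
  have H0: "\<And>w lam s. lam \<ge> 0 \<Longrightarrow> V w lam s = max (Q_act R (P w) (c w) beta (V w) s lam) (Q_pass R P0 beta (V w) s lam)"
    using assms(6) unfolding is_value_fn_def by blast
  have H: "\<And>w lam s. lam \<ge> 0 \<Longrightarrow> V w lam s = max (R s - lam * c w + beta * (\<Sum>s'\<in>UNIV. P w s s' * V w lam s'))
                (R s + beta * (\<Sum>s'\<in>UNIV. P0 s s' * V w lam s'))"
    using H0 unfolding Q_act_def Q_pass_def by assumption
  have PP: "P j' = P j" using assms(8) by (intro ext) auto
  have VV: "V j lam = V j' (k * lam)" if l: "lam \<ge> 0" for lam
  proof (rule bellman_unique[OF assms(1) assms(2)[rule_format, of j] assms(4) assms(5)])
    show "\<forall>s. V j lam s = max (R s - lam * c j + beta * (\<Sum>s'\<in>UNIV. P j s s' * V j lam s'))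
                (R s + beta * (\<Sum>s'\<in>UNIV. P0 s s' * V j lam s'))"
      using H l by blast
    have "k * lam \<ge> 0" using k0 l by simp
    hence "\<forall>s. V j' (k*lam) s = max (R s - k*lam * c j' + beta * (\<Sum>s'\<in>UNIV. P j' s s' * V j' (k*lam) s'))
                (R s + beta * (\<Sum>s'\<in>UNIV. P0 s s' * V j' (k*lam) s'))"
      using H by blast
    thus "\<forall>s. V j' (k*lam) s = max (R s - lam * c j + beta * (\<Sum>s'\<in>UNIV. P j s s' * V j' (k*lam) s'))
                (R s + beta * (\<Sum>s'\<in>UNIV. P0 s s' * V j' (k*lam) s'))"
      unfolding kc PP .
  qed
  have EQ: "(Q_act R (P j) (c j) beta (V j) s lam = Q_pass R P0 beta (V j) s lam) \<longleftrightarrow>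
            (Q_act R (P j') (c j') beta (V j') s (k*lam) = Q_pass R P0 beta (V j') s (k*lam))"
    if "lam \<ge> 0" for lam
    using VV[OF that] unfolding Q_act_def Q_pass_def by (simp only: kc PP)
  from assms(9) have w1: "0 \<le> lam1" "Q_act R (P j) (c j) beta (V j) s lam1 = Q_pass R P0 beta (V j) s lam1"
    "\<forall>mu\<ge>0. Q_act R (P j) (c j) beta (V j) s mu = Q_pass R P0 beta (V j) s mu \<longrightarrow> lam1 \<le> mu"
    unfolding is_whittle_index_def by auto
  from assms(10) have w2: "0 \<le> lam2" "Q_act R (P j') (c j') beta (V j') s lam2 = Q_pass R P0 beta (V j') s lam2"
    "\<forall>mu\<ge>0. Q_act R (P j') (c j') beta (V j') s mu = Q_pass R P0 beta (V j') s mu \<longrightarrow> lam2 \<le> mu"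
    unfolding is_whittle_index_def by auto
  have "k * lam1 \<ge> 0" using k0 w1(1) by simp
  hence a: "lam2 \<le> k * lam1" using w2(3) EQ[OF w1(1)] w1(2) by blast
  have l2k: "lam2 / k \<ge> 0" using k0 w2(1) by simp
  have "k * (lam2 / k) = lam2" using k0 by simp
  hence "Q_act R (P j) (c j) beta (V j) s (lam2/k) = Q_pass R P0 beta (V j) s (lam2/k)"
    using EQ[OF l2k] w2(2) by simp
  hence "lam1 \<le> lam2 / k" using w1(3) l2k by blast
  hence "k * lam1 \<le> lam2" using k0 by (simp add: field_simps)
  hence L: "lam2 = k * lam1" using a by simp
  have "c j * lam1 = c j' * lam2" using L cj' unfolding k_def by simp
  moreover have "lam2 \<noteq> 0 \<longrightarrow> lam1 / lam2 = c j' / c j"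
    using L cj cj' unfolding k_def by (auto simp: field_simps)
  ultimately show ?thesis by blast
qed

end
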